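(* Let $\mathbb{F}\in\{\mathbb{R},\mathbb{C}\}$, $N\ge 2$, and let $\mathcal{E}(M,N)=\{\{\varphi_i\}_{i=1}^M\subseteq\mathbb{F}^N:\|\varphi_i\|=\sqrt{N/M}\text{ for all }i\}$. Suppose an equiangular Parseval frame for $\mathbb{F}^N$ with $M$ vectors exists. Then $\Phi\in\mathcal{E}(M,N)$ maximizes $NE_2$ over $\mathcal{E}(M,N)$ if and only if $\Phi$ is an equiangular Parseval frame.
   Context: $\Phi$ also denotes the $N\times M$ matrix with columns $\varphi_i$. A Parseval frame satisfies $\Phi\Phi^*=I$; it is equiangular if all $\|\varphi_i\|$ are equal and all $|\langle\varphi_i,\varphi_j\rangle|$, $i\ne j$, are equal. For $K\subseteq[M]$, $\Phi_K$ is the submatrix of columns indexed by $K$. The nuclear norm $\|F\|_*$ is the sum of the singular values of $F$, and $NE_k(\Phi)=\sum_{|K|=k}\|\Phi_K\|_*$. *)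

theory Defs
  imports Complex_Main "Jordan_Normal_Form.Schur_Decomposition" "Jordan_Normal_Form.Char_Poly"
begin

text \<open>A family of M vectors in F^N (F = R or C, embedded in C) is an N x M complex
  matrix Phi whose columns are the vectors; columns are indexed 0..M-1.\<close>

definition col_norm :: "complex mat \<Rightarrow> nat \<Rightarrow> real" where
  "col_norm Phi j = sqrt (\<Sum>r<dim_row Phi. (cmod (Phi $$ (r, j)))\<^sup>2)"

definition col_inner :: "complex mat \<Rightarrow> nat \<Rightarrow> nat \<Rightarrow> complex" where
  "col_inner Phi i j = (\<Sum>r<dim_row Phi. Phi $$ (r, i) * cnj (Phi $$ (r, j)))"

definition parseval :: "complex mat \<Rightarrow> bool" where
  "parseval Phi \<longleftrightarrow> Phi * mat_adjoint Phi = 1\<^sub>m (dim_row Phi)"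

definition equiangular :: "complex mat \<Rightarrow> bool" where
  "equiangular Phi \<longleftrightarrow>
     (\<forall>i<dim_col Phi. \<forall>j<dim_col Phi. col_norm Phi i = col_norm Phi j) \<and>
     (\<forall>i<dim_col Phi. \<forall>j<dim_col Phi. \<forall>k<dim_col Phi. \<forall>l<dim_col Phi.
        i \<noteq> j \<longrightarrow> k \<noteq> l \<longrightarrow> cmod (col_inner Phi i j) = cmod (col_inner Phi k l))"

text \<open>Nuclear norm: sum of the singular values, i.e. of the square roots of the eigenvalues
  (counted with algebraic multiplicity) of A^* A.\<close>
definition nuclear_norm :: "complex mat \<Rightarrow> real" where
  "nuclear_norm A =
     (let p = char_poly (mat_adjoint A * A)
      in \<Sum>z\<in>{z. poly p z = 0}. real (order z p) * sqrt (Re z))"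

definition col_submat :: "complex mat \<Rightarrow> nat set \<Rightarrow> complex mat" where
  "col_submat Phi K = mat (dim_row Phi) (card K) (\<lambda>(r, j). Phi $$ (r, enumerate K j))"

definition NE :: "nat \<Rightarrow> complex mat \<Rightarrow> real" where
  "NE k Phi = (\<Sum>K\<in>{K. K \<subseteq> {..<dim_col Phi} \<and> card K = k}. nuclear_norm (col_submat Phi K))"

definition frames_in :: "complex set \<Rightarrow> nat \<Rightarrow> nat \<Rightarrow> complex mat set" where
  "frames_in F M N = {Phi. Phi \<in> carrier_mat N M \<and> (\<forall>r<N. \<forall>j<M. Phi $$ (r, j) \<in> F)}"

definition E_set :: "complex set \<Rightarrow> nat \<Rightarrow> nat \<Rightarrow> complex mat set" where
  "E_set F M N = {Phi \<in> frames_in F M N. \<forall>j<M. col_norm Phi j = sqrt (real N / real M)}"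

end

theory Submission
  imports Defs "HOL-Analysis.Convex"
begin


lemma det2: assumes "A \<in> carrier_mat 2 2"
  shows "det A = A $$ (0,0) * A $$ (1,1) - A $$ (0,1) * A $$ (1,0)"
proof -
  have "det A = (\<Sum>i<2. A $$ (i,0) * cofactor A i 0)"
    by (rule laplace_expansion_column[OF assms]) simp
  also have "\<dots> = A $$ (0,0) * cofactor A 0 0 + A $$ (1,0) * cofactor A 1 0"
    by (simp add: numeral_2_eq_2)
  also have "cofactor A 0 0 = A $$ (1,1)"
    unfolding cofactor_def using assms
    by (subst det_single) (auto simp: mat_delete_def insert_index_def)
  also have "cofactor A 1 0 = - A $$ (0,1)"
    unfolding cofactor_def using assms
    by (subst det_single) (auto simp: mat_delete_def insert_index_def)
  finally show ?thesis by (simp add: algebra_simps)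
qed

lemma enum2: assumes "i < (j::nat)" shows "enumerate {i,j} 0 = i" "enumerate {i,j} (Suc 0) = j"
proof -
  have l: "(LEAST n. n \<in> {i,j}) = i" using assms by (intro Least_equality) auto
  show "enumerate {i,j} 0 = i" using l by (simp add: enumerate_0)
  have "{i,j} - {i} = {j}" using assms by auto
  moreover have "(LEAST n. n = j) = j" by (rule Least_equality) auto
  ultimately show "enumerate {i,j} (Suc 0) = j" using l by (simp add: enumerate_Suc enumerate_0)
qed

lemma adj_carrier: "A \<in> carrier_mat n m \<Longrightarrow> mat_adjoint A \<in> carrier_mat m n"
  unfolding mat_adjoint_def by auto

lemma adj_index: "A \<in> carrier_mat n m \<Longrightarrow> k < m \<Longrightarrow> r < n \<Longrightarrow>
   mat_adjoint A $$ (k,r) = cnj (A $$ (r,k))"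
  unfolding mat_adjoint_def by (subst mat_of_rows_index) auto

lemma mult_index: "A \<in> carrier_mat n m \<Longrightarrow> B \<in> carrier_mat m p \<Longrightarrow> i < n \<Longrightarrow> j < p \<Longrightarrow>
   (A * B) $$ (i,j) = (\<Sum>k<m. A $$ (i,k) * B $$ (k,j))"
  by (auto simp: scalar_prod_def atLeast0LessThan intro!: sum.cong)

lemma cpm_index: "B \<in> carrier_mat n n \<Longrightarrow> i < n \<Longrightarrow> j < n \<Longrightarrow>
  char_poly_matrix B $$ (i,j) = (if i = j then [:-(B$$(i,j)),1:] else [:-(B$$(i,j)):])"
  unfolding char_poly_matrix_def by (auto simp: one_pCons)

lemma charpoly2: fixes B :: "complex mat" assumes "B \<in> carrier_mat 2 2"
  shows "char_poly B = [:-(B $$ (0,0)), 1:] * [:-(B $$ (1,1)), 1:] - [:B $$ (0,1) * B $$ (1,0):]"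
proof -
  have C: "char_poly_matrix B \<in> carrier_mat 2 2" using assms by simp
  have "[:-(B $$ (0,1)):] * [:-(B $$ (1,0)):] = [:B $$ (0,1) * B $$ (1,0):]" by simp
  then show ?thesis unfolding char_poly_def det2[OF C] 
    using cpm_index[OF assms, of 0 0] cpm_index[OF assms, of 0 1] cpm_index[OF assms, of 1 0] cpm_index[OF assms, of 1 1]
    by simp
qed

lemma order_lin: "order z [:-x,1:] = (if z = (x::complex) then 1 else 0)"
proof (cases "z = x")
  case True then show ?thesis using order_power_n_n[of x 1] by simp
next
  case False then show ?thesis by (simp add: order_0I)
qed

lemma root_sum: fixes x y :: complex
  shows "(\<Sum>z\<in>{z. poly ([:-x,1:]*[:-y,1:]) z = 0}. real (order z ([:-x,1:]*[:-y,1:])) * g z) = g x + g y"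
proof -
  let ?p = "[:-x,1:]*[:-y,1:]"
  have nz: "?p \<noteq> 0" by (simp add: no_zero_divisors)
  have P: "poly ?p z = (z - x) * (z - y)" for z by (simp add: algebra_simps)
  have R: "{z. poly ?p z = 0} = {x,y}" unfolding P by auto
  have O: "order z ?p = (if z = x then 1 else 0) + (if z = y then 1 else 0)" for z
    using order_mult[OF nz, of z] order_lin by simp
  show ?thesis unfolding R O
    by (cases "x = y") (auto simp: algebra_simps)
qed

lemma lin_prod: "[:-p,1:]*[:-q,1:] = [:p*q, -(p+q), (1::complex):]"
  by (simp add: algebra_simps)

lemma col_norm_sq: "(col_norm Phi i)\<^sup>2 = (\<Sum>r<dim_row Phi. (cmod (Phi $$ (r, i)))\<^sup>2)"
  unfolding col_norm_def by (simp add: sum_nonneg)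

lemma sum_cnj_self: "(\<Sum>r<n. cnj (f r) * f r) = complex_of_real (\<Sum>r<n. (cmod (f r))\<^sup>2)"
  unfolding of_real_sum by (intro sum.cong refl) (metis complex_norm_square mult.commute)

lemma nn_pair:
  assumes P: "Psi \<in> carrier_mat N M" and ij: "i < j" "j < M"
    and ni: "(col_norm Psi i)\<^sup>2 = a" and nj: "(col_norm Psi j)\<^sup>2 = a"
  shows "nuclear_norm (col_submat Psi {i,j}) = sqrt (a + cmod (col_inner Psi i j)) + sqrt (a - cmod (col_inner Psi i j))"
proof -
  define c where "c = col_inner Psi i j"
  define A where "A = col_submat Psi {i,j}"
  have cardK: "card {i,j} = 2" using ij by auto
  have A: "A \<in> carrier_mat N 2" unfolding A_def col_submat_def using P cardK by auto
  have A0: "A $$ (r,0) = Psi $$ (r,i)" if "r < N" for r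
    unfolding A_def col_submat_def using P cardK that enum2[OF ij(1)] by auto
  have A1: "A $$ (r,1) = Psi $$ (r,j)" if "r < N" for r
    unfolding A_def col_submat_def using P cardK that enum2[OF ij(1)] by auto
  define B where "B = mat_adjoint A * A"
  have B: "B \<in> carrier_mat 2 2" unfolding B_def using A adj_carrier[OF A] by auto
  have Bkl: "B $$ (k,l) = (\<Sum>r<N. cnj (A $$ (r,k)) * A $$ (r,l))" if "k < 2" "l < 2" for k l
    unfolding B_def using mult_index[OF adj_carrier[OF A] A] adj_index[OF A] that by simp
  have B00: "B $$ (0,0) = a"
  proof -
    have "B $$ (0,0) = (\<Sum>r<N. cnj (Psi $$ (r,i)) * Psi $$ (r,i))"
      using Bkl[of 0 0] A0 by simp
    also have "\<dots> = a" unfolding sum_cnj_self ni[symmetric] col_norm_sq using P by simp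
    finally show ?thesis .
  qed
  have B11: "B $$ (1,1) = a"
  proof -
    have "B $$ (1,1) = (\<Sum>r<N. cnj (Psi $$ (r,j)) * Psi $$ (r,j))"
      using Bkl[of 1 1] A1 by simp
    also have "\<dots> = a" unfolding sum_cnj_self nj[symmetric] col_norm_sq using P by simp
    finally show ?thesis .
  qed
  have B01: "B $$ (0,1) = cnj c"
    using Bkl[of 0 1] A0 A1 P unfolding c_def col_inner_def by (simp add: mult.commute)
  have B10: "B $$ (1,0) = c"
    using Bkl[of 1 0] A0 A1 P unfolding c_def col_inner_def by (simp add: mult.commute)
  define u where "u = cmod c"
  have cc: "cnj c * c = complex_of_real (u^2)" unfolding u_def by (metis complex_norm_square mult.commute)
  have CP: "char_poly B = [:-(complex_of_real (a+u)),1:] * [:-(complex_of_real (a-u)),1:]"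
    unfolding charpoly2[OF B] B00 B11 B01 B10 cc lin_prod
    by (simp add: algebra_simps power2_eq_square)
  have "nuclear_norm A = sqrt (Re (complex_of_real (a+u))) + sqrt (Re (complex_of_real (a-u)))"
    unfolding nuclear_norm_def Let_def B_def[symmetric] CP by (rule root_sum)
  then show ?thesis unfolding A_def u_def c_def by simp
qed



lemma amgm_sq: fixes x y :: real assumes "y > 0"
  shows "x \<le> (x^2 + y^2) / (2*y)" and "x = (x^2 + y^2) / (2*y) \<Longrightarrow> x = y"
proof -
  have "0 \<le> (x - y)^2" by simp
  then have "2*y*x \<le> x^2 + y^2" by (simp add: power2_eq_square algebra_simps)
  then show "x \<le> (x^2 + y^2) / (2*y)" using assms by (simp add: field_simps)
  assume "x = (x^2 + y^2) / (2*y)"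
  then have "2*y*x = x^2 + y^2" using assms by (simp add: field_simps)
  then have "(x - y)^2 = 0" by (simp add: power2_eq_square algebra_simps)
  then show "x = y" by simp
qed

definition Hf :: "real \<Rightarrow> real \<Rightarrow> real" where
  "Hf a t = sqrt (2*a + 2 * sqrt (a^2 - t))"

lemma tangent:
  fixes a t t0 :: real
  assumes a: "a > 0" and t0: "t0 < a^2" and t: "t \<le> a^2"
  defines "s0 \<equiv> sqrt (a^2 - t0)"
  defines "\<beta> \<equiv> 1 / (2 * s0 * Hf a t0)"
  shows "Hf a t \<le> Hf a t0 - \<beta> * (t - t0)"
    and "Hf a t = Hf a t0 - \<beta> * (t - t0) \<Longrightarrow> t = t0"
    and "\<beta> > 0"
proof -
  define s where "s = sqrt (a^2 - t)"
  have s0p: "s0 > 0" unfolding s0_def using t0 by simp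
  have s0sq: "s0^2 = a^2 - t0" unfolding s0_def using t0 by simp
  have sp: "s \<ge> 0" unfolding s_def using t by simp
  have ssq: "s^2 = a^2 - t" unfolding s_def using t by simp
  define w0 where "w0 = 2*a + 2*s0"
  define S where "S = sqrt w0"
  have w0p: "w0 > 0" unfolding w0_def using a s0p by simp
  have Sp: "S > 0" unfolding S_def using w0p by simp
  have Ssq: "S^2 = w0" unfolding S_def using w0p by simp
  have HS: "Hf a t0 = S" unfolding Hf_def S_def w0_def s0_def by simp
  define w where "w = 2*a + 2*s"
  have wp: "w > 0" unfolding w_def using a sp by simp
  have Ht: "Hf a t = sqrt w" unfolding Hf_def w_def s_def by simp
  have wsq: "(sqrt w)^2 = w" using wp by simp
  have A1: "sqrt w \<le> (w + w0) / (2*S)" using amgm_sq(1)[OF Sp, of "sqrt w"] wsq Ssq by simp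
  have A2: "s \<le> (s^2 + s0^2) / (2*s0)" using amgm_sq(1)[OF s0p] .
  have key: "(2*a + 2*((s^2 + s0^2) / (2*s0)) + w0) / (2*S) = S - 1/(2*s0*S) * (t - t0)"
  proof -
    have E: "s^2 + s0^2 = 2*s0^2 + (t0 - t)" using ssq s0sq by simp
    have "2*((s^2 + s0^2) / (2*s0)) = (2*s0^2 + (t0 - t)) / s0" unfolding E using s0p by (simp add: field_simps)
    also have "\<dots> = 2*s0 + (t0 - t)/s0" using s0p by (simp add: add_divide_distrib power2_eq_square)
    finally have "2*((s^2 + s0^2) / (2*s0)) = 2*s0 + (t0 - t)/s0" .
    then have "2*a + 2*((s^2 + s0^2) / (2*s0)) + w0 = 2*S^2 + (t0 - t)/s0" using Ssq unfolding w0_def by simp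
    then have "(2*a + 2*((s^2 + s0^2) / (2*s0)) + w0) / (2*S) = (2*S^2 + (t0 - t)/s0) / (2*S)" by simp
    also have "\<dots> = S - 1/(2*s0*S) * (t - t0)" using Sp s0p by (simp add: field_simps power2_eq_square)
    finally show ?thesis .
  qed
  have A3: "(w + w0) / (2*S) \<le> (2*a + 2*((s^2 + s0^2) / (2*s0)) + w0) / (2*S)"
    unfolding w_def using A2 Sp by (intro divide_right_mono) linarith+
  show "Hf a t \<le> Hf a t0 - \<beta> * (t - t0)"
    unfolding Ht HS \<beta>_def using A1 A3 key by simp
  show "\<beta> > 0" unfolding \<beta>_def HS using s0p Sp by simp
  assume eq: "Hf a t = Hf a t0 - \<beta> * (t - t0)"
  then have e1: "sqrt w = (w + w0) / (2*S)" and e2: "(w + w0) / (2*S) = (2*a + 2*((s^2 + s0^2) / (2*s0)) + w0) / (2*S)"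
    unfolding Ht HS \<beta>_def using A1 A3 key by linarith+
  from e2 Sp have "w = 2*a + 2*((s^2 + s0^2) / (2*s0))" by (simp add: field_simps)
  then have "s = (s^2 + s0^2) / (2*s0)" unfolding w_def by linarith
  then have "s = s0" using amgm_sq(2)[OF s0p] by simp
  then have "s^2 = s0^2" by simp
  then show "t = t0" using ssq s0sq by simp
qed

lemma Hf_pair: fixes a u :: real assumes "0 \<le> u" "u \<le> a"
  shows "sqrt (a + u) + sqrt (a - u) = Hf a (u^2)"
proof -
  have nn: "0 \<le> sqrt (a + u) + sqrt (a - u)" using assms by simp
  have "(sqrt (a + u) + sqrt (a - u))^2 = 2*a + 2 * sqrt (a^2 - u^2)"
    using assms by (simp add: power2_eq_square algebra_simps real_sqrt_mult[symmetric])
  then show ?thesis unfolding Hf_def using nn by (metis real_sqrt_unique)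
qed

lemma sum_bound:
  fixes a t0 :: real and T :: "'i \<Rightarrow> real" and I :: "'i set"
  assumes fin: "finite I" and a: "a > 0" and t0: "t0 < a^2" and T: "\<And>p. p \<in> I \<Longrightarrow> T p \<le> a^2"
    and S: "real (card I) * t0 \<le> (\<Sum>p\<in>I. T p)"
  shows "(\<Sum>p\<in>I. Hf a (T p)) \<le> real (card I) * Hf a t0"
    and "(\<Sum>p\<in>I. Hf a (T p)) = real (card I) * Hf a t0 \<Longrightarrow> (\<forall>p\<in>I. T p = t0)"
proof -
  define \<beta> where "\<beta> = 1 / (2 * sqrt (a^2 - t0) * Hf a t0)"
  have bp: "\<beta> > 0" unfolding \<beta>_def using tangent(3)[OF a t0 order_refl] by simp
  define d where "d p = (Hf a t0 - \<beta> * (T p - t0)) - Hf a (T p)" for p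
  have dn: "d p \<ge> 0" if "p \<in> I" for p
    unfolding d_def \<beta>_def using tangent(1)[OF a t0 T[OF that]] by simp
  have sd: "(\<Sum>p\<in>I. d p) = real (card I) * Hf a t0 - \<beta> * ((\<Sum>p\<in>I. T p) - real (card I) * t0) - (\<Sum>p\<in>I. Hf a (T p))"
    unfolding d_def by (simp add: sum_subtractf sum.distrib sum_distrib_left algebra_simps)
  have "(\<Sum>p\<in>I. d p) \<ge> 0" using dn by (simp add: sum_nonneg)
  moreover have "\<beta> * ((\<Sum>p\<in>I. T p) - real (card I) * t0) \<ge> 0" using bp S by simp
  ultimately show "(\<Sum>p\<in>I. Hf a (T p)) \<le> real (card I) * Hf a t0" using sd by linarith
  assume eq: "(\<Sum>p\<in>I. Hf a (T p)) = real (card I) * Hf a t0"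
  have "\<beta> * ((\<Sum>p\<in>I. T p) - real (card I) * t0) \<ge> 0" using bp S by simp
  then have "(\<Sum>p\<in>I. d p) \<le> 0" using sd eq by linarith
  then have "(\<Sum>p\<in>I. d p) = 0" using dn by (meson order_antisym sum_nonneg)
  then have "\<forall>p\<in>I. d p = 0" using sum_nonneg_eq_0_iff[OF fin] dn by blast
  then show "\<forall>p\<in>I. T p = t0"
    unfolding d_def \<beta>_def using tangent(2)[OF a t0 T] by auto
qed



definition Pr :: "nat \<Rightarrow> (nat \<times> nat) set" where
  "Pr M = {(i,j). i < j \<and> j < M}"

lemma Pr_finite: "finite (Pr M)"
  by (rule finite_subset[of _ "{..<M} \<times> {..<M}"]) (auto simp: Pr_def)

lemma Pr_Suc: "Pr (Suc M) = Pr M \<union> (\<lambda>i. (i,M)) ` {..<M}"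
  by (auto simp: Pr_def less_Suc_eq)

lemma decomp:
  fixes f :: "nat \<Rightarrow> nat \<Rightarrow> real"
  assumes sym: "\<And>i j. f i j = f j i"
  shows "(\<Sum>i<M. \<Sum>j<M. f i j) = (\<Sum>i<M. f i i) + 2 * (\<Sum>p\<in>Pr M. f (fst p) (snd p))"
proof (induction M)
  case 0 then show ?case by (simp add: Pr_def)
next
  case (Suc M)
  have disj: "Pr M \<inter> (\<lambda>i. (i,M)) ` {..<M} = {}" by (auto simp: Pr_def)
  have "(\<Sum>p\<in>Pr (Suc M). f (fst p) (snd p)) = (\<Sum>p\<in>Pr M. f (fst p) (snd p)) + (\<Sum>i<M. f i M)"
    unfolding Pr_Suc using disj Pr_finite
    by (subst sum.union_disjoint) (auto simp: sum.reindex inj_on_def)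
  moreover have "(\<Sum>i<Suc M. \<Sum>j<Suc M. f i j) = (\<Sum>i<M. \<Sum>j<M. f i j) + 2 * (\<Sum>i<M. f i M) + f M M"
    using sym by (simp add: sum.distrib)
  ultimately show ?case using Suc.IH by simp
qed

lemma card_Pr: "2 * real (card (Pr M)) = real M * (real M - 1)"
proof -
  have "(\<Sum>i<M. \<Sum>j<M. (1::real)) = (\<Sum>i<M. 1) + 2 * (\<Sum>p\<in>Pr M. (1::real))"
    by (rule decomp) simp
  then show ?thesis by (simp add: power2_eq_square algebra_simps)
qed

lemma pairs_bij: "(\<lambda>p. {fst p, snd p}) ` Pr M = {K. K \<subseteq> {..<M} \<and> card K = 2}"
  and pairs_inj: "inj_on (\<lambda>p. {fst p, snd p}) (Pr M)"
proof -
  show "(\<lambda>p. {fst p, snd p}) ` Pr M = {K. K \<subseteq> {..<M} \<and> card K = 2}"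
  proof (intro equalityI subsetI)
    fix K assume "K \<in> (\<lambda>p. {fst p, snd p}) ` Pr M"
    then show "K \<in> {K. K \<subseteq> {..<M} \<and> card K = 2}" by (auto simp: Pr_def)
  next
    fix K assume "K \<in> {K. K \<subseteq> {..<M} \<and> card K = 2}"
    then obtain x y where K: "K = {x,y}" "x \<noteq> y" "x < M" "y < M" by (auto simp: card_2_iff)
    show "K \<in> (\<lambda>p. {fst p, snd p}) ` Pr M"
    proof (cases "x < y")
      case True
      then have "(x,y) \<in> Pr M" "K = (\<lambda>p. {fst p, snd p}) (x,y)" using K by (auto simp: Pr_def)
      then show ?thesis by blast
    next
      case False
      then have "(y,x) \<in> Pr M" "K = (\<lambda>p. {fst p, snd p}) (y,x)" using K by (auto simp: Pr_def)
      then show ?thesis by blast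
    qed
  qed
  show "inj_on (\<lambda>p. {fst p, snd p}) (Pr M)"
    by (auto simp: inj_on_def Pr_def doubleton_eq_iff)
qed

lemma NE2_pairs: assumes "Psi \<in> carrier_mat N M"
  shows "NE 2 Psi = (\<Sum>p\<in>Pr M. nuclear_norm (col_submat Psi {fst p, snd p}))"
proof -
  have "dim_col Psi = M" using assms by simp
  then show ?thesis unfolding NE_def pairs_bij[symmetric]
    by (subst sum.reindex[OF pairs_inj]) simp
qed

lemma col_CS: "cmod (col_inner Psi i j) \<le> col_norm Psi i * col_norm Psi j"
proof -
  let ?n = "dim_row Psi"
  let ?x = "\<lambda>r. cmod (Psi $$ (r,i))" and ?y = "\<lambda>r. cmod (Psi $$ (r,j))"
  have "cmod (col_inner Psi i j) \<le> (\<Sum>r<?n. cmod (Psi $$ (r,i) * cnj (Psi $$ (r,j))))"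
    unfolding col_inner_def by (rule norm_sum)
  also have "\<dots> = (\<Sum>r<?n. ?x r * ?y r)" by (simp add: norm_mult)
  also have "\<dots> \<le> sqrt ((\<Sum>r<?n. (?x r)\<^sup>2) * (\<Sum>r<?n. (?y r)\<^sup>2))"
    by (rule real_le_rsqrt) (rule Cauchy_Schwarz_ineq_sum)
  also have "\<dots> = col_norm Psi i * col_norm Psi j" unfolding col_norm_def by (simp add: real_sqrt_mult)
  finally show ?thesis .
qed

lemma col_inner_swap: "col_inner Psi j i = cnj (col_inner Psi i j)"
  unfolding col_inner_def by (simp add: mult.commute)

lemma col_inner_diag: "col_inner Psi i i = complex_of_real ((col_norm Psi i)\<^sup>2)"
  unfolding col_inner_def col_norm_sq of_real_sum
  by (intro sum.cong refl) (metis complex_norm_square)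

definition FPot :: "complex mat \<Rightarrow> real" where
  "FPot Psi = (\<Sum>i<dim_col Psi. \<Sum>j<dim_col Psi. (cmod (col_inner Psi i j))\<^sup>2)"

lemma swap4: "(\<Sum>i<M. \<Sum>j<M. \<Sum>r<N. \<Sum>s<N. f i j r s) = (\<Sum>r<N. \<Sum>s<N. \<Sum>i<M. \<Sum>j<M. (f i j r s :: complex))"
proof -
  have "(\<Sum>i<M. \<Sum>j<M. \<Sum>r<N. \<Sum>s<N. f i j r s) = (\<Sum>i<M. \<Sum>r<N. \<Sum>j<M. \<Sum>s<N. f i j r s)"
    by (intro sum.cong refl) (rule sum.swap)
  also have "\<dots> = (\<Sum>r<N. \<Sum>i<M. \<Sum>j<M. \<Sum>s<N. f i j r s)" by (rule sum.swap)
  also have "\<dots> = (\<Sum>r<N. \<Sum>i<M. \<Sum>s<N. \<Sum>j<M. f i j r s)"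
    by (intro sum.cong refl) (rule sum.swap)
  also have "\<dots> = (\<Sum>r<N. \<Sum>s<N. \<Sum>i<M. \<Sum>j<M. f i j r s)"
    by (intro sum.cong refl) (rule sum.swap)
  finally show ?thesis .
qed

lemma FPot_frob: assumes P: "Psi \<in> carrier_mat N M"
  shows "FPot Psi = (\<Sum>r<N. \<Sum>s<N. (cmod ((Psi * mat_adjoint Psi) $$ (r,s)))\<^sup>2)"
proof -
  let ?S = "Psi * mat_adjoint Psi"
  have Srs: "?S $$ (r,s) = (\<Sum>i<M. Psi $$ (r,i) * cnj (Psi $$ (s,i)))" if "r < N" "s < N" for r s
    using mult_index[OF P adj_carrier[OF P]] adj_index[OF P] that by simp
  have sq: "complex_of_real ((cmod z)\<^sup>2) = z * cnj z" for z by (metis complex_norm_square)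
  have E: "(\<Sum>i<M. \<Sum>j<M. Psi $$ (r,i) * cnj (Psi $$ (r,j)) * (cnj (Psi $$ (s,i)) * Psi $$ (s,j))) = ?S $$ (r,s) * cnj (?S $$ (r,s))"
    if "r < N" "s < N" for r s
    unfolding Srs[OF that] by (simp add: sum_distrib_left sum_distrib_right algebra_simps) (rule sum.swap)
  have "complex_of_real (FPot Psi) = (\<Sum>i<M. \<Sum>j<M. col_inner Psi i j * cnj (col_inner Psi i j))"
    unfolding FPot_def of_real_sum sq using P by simp
  also have "\<dots> = (\<Sum>i<M. \<Sum>j<M. \<Sum>s<N. \<Sum>r<N. Psi $$ (r,i) * cnj (Psi $$ (r,j)) * (cnj (Psi $$ (s,i)) * Psi $$ (s,j)))"
    unfolding col_inner_def using P by (simp add: sum_distrib_left sum_distrib_right)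
  also have "\<dots> = (\<Sum>s<N. \<Sum>r<N. \<Sum>i<M. \<Sum>j<M. Psi $$ (r,i) * cnj (Psi $$ (r,j)) * (cnj (Psi $$ (s,i)) * Psi $$ (s,j)))"
    by (rule swap4)
  also have "\<dots> = (\<Sum>s<N. \<Sum>r<N. ?S $$ (r,s) * cnj (?S $$ (r,s)))"
    by (intro sum.cong refl) (simp add: E)
  also have "\<dots> = (\<Sum>r<N. \<Sum>s<N. ?S $$ (r,s) * cnj (?S $$ (r,s)))"
    by (rule sum.swap)
  also have "\<dots> = complex_of_real (\<Sum>r<N. \<Sum>s<N. (cmod (?S $$ (r,s)))\<^sup>2)"
    unfolding of_real_sum sq ..
  finally show ?thesis by (simp only: of_real_eq_iff)
qed

lemma cmod_minus_delta: "(cmod (z - (if b then 1 else 0)))\<^sup>2 = (cmod z)\<^sup>2 - (if b then 2 * Re z - 1 else 0)"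
  by (cases b) (simp_all add: cmod_power2 power2_diff algebra_simps)

lemma parseval_FP: assumes P: "Psi \<in> carrier_mat N M" and tr: "(\<Sum>i<M. (col_norm Psi i)\<^sup>2) = real N"
  shows "FPot Psi \<ge> real N" and "parseval Psi \<longleftrightarrow> FPot Psi = real N"
proof -
  let ?S = "Psi * mat_adjoint Psi"
  have SC: "?S \<in> carrier_mat N N" using P adj_carrier[OF P] by auto
  have Srr: "Re (?S $$ (r,r)) = (\<Sum>i<M. (cmod (Psi $$ (r,i)))\<^sup>2)" if "r < N" for r
  proof -
    have "?S $$ (r,r) = (\<Sum>i<M. Psi $$ (r,i) * cnj (Psi $$ (r,i)))"
      using mult_index[OF P adj_carrier[OF P]] adj_index[OF P] that by simp
    also have "\<dots> = complex_of_real (\<Sum>i<M. (cmod (Psi $$ (r,i)))\<^sup>2)"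
      unfolding of_real_sum by (intro sum.cong refl) (metis complex_norm_square)
    finally show ?thesis by simp
  qed
  have trS: "(\<Sum>r<N. Re (?S $$ (r,r))) = real N"
  proof -
    have "(\<Sum>r<N. Re (?S $$ (r,r))) = (\<Sum>r<N. \<Sum>i<M. (cmod (Psi $$ (r,i)))\<^sup>2)"
      using Srr by simp
    also have "\<dots> = (\<Sum>i<M. \<Sum>r<N. (cmod (Psi $$ (r,i)))\<^sup>2)" by (rule sum.swap)
    also have "\<dots> = (\<Sum>i<M. (col_norm Psi i)\<^sup>2)" unfolding col_norm_sq using P by simp
    finally show ?thesis using tr by simp
  qed
  define D where "D = (\<Sum>r<N. \<Sum>s<N. (cmod (?S $$ (r,s) - (if r = s then 1 else 0)))\<^sup>2)"
  have "D = (\<Sum>r<N. \<Sum>s<N. (cmod (?S $$ (r,s)))\<^sup>2) - (\<Sum>r<N. \<Sum>s<N. (if r = s then 2 * Re (?S $$ (r,s)) - 1 else 0))"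
    unfolding D_def cmod_minus_delta by (simp add: sum_subtractf)
  also have "(\<Sum>r<N. \<Sum>s<N. (if r = s then 2 * Re (?S $$ (r,s)) - 1 else 0)) = (\<Sum>r<N. 2 * Re (?S $$ (r,r)) - 1)"
    by (intro sum.cong refl) (simp add: sum.delta)
  also have "\<dots> = real N" using trS by (simp add: sum_subtractf sum_distrib_left[symmetric])
  finally have DF: "D = FPot Psi - real N" using FPot_frob[OF P] by simp
  have Dn: "D \<ge> 0" unfolding D_def by (intro sum_nonneg) simp
  then show "FPot Psi \<ge> real N" using DF by simp
  have "parseval Psi \<longleftrightarrow> (\<forall>r<N. \<forall>s<N. ?S $$ (r,s) = (if r = s then 1 else 0))"
    unfolding parseval_def using SC P
    by (auto intro!: eq_matI)
  also have "\<dots> \<longleftrightarrow> D = 0"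
    unfolding D_def
    by (auto simp add: sum_nonneg sum_nonneg_eq_0_iff)
  finally show "parseval Psi \<longleftrightarrow> FPot Psi = real N" using DF by simp
qed



lemma t0_lt: fixes n m :: real assumes "n \<ge> 2" "m \<ge> n"
  shows "(n - n^2/m) / (m * (m - 1)) < (n/m)^2"
proof -
  have mp: "m > 0" "m - 1 > 0" using assms by auto
  have e1: "(n - n^2/m) / (m * (m - 1)) = (n*(m-n)) / (m^2*(m-1))"
    using mp by (simp add: field_simps power2_eq_square)
  have e2: "(n/m)^2 = (n^2*(m-1)) / (m^2*(m-1))"
    using mp by (simp add: field_simps power2_eq_square)
  have "(n-1)*m > 0" using mp assms by simp
  then have "m - n < n*(m-1)" by (simp add: algebra_simps)
  then have "n*(m-n) < n*(n*(m-1))" using assms by (intro mult_strict_left_mono) auto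
  then have "n*(m-n) < n^2*(m-1)" by (simp add: power2_eq_square algebra_simps)
  moreover have "m^2*(m-1) > 0" using mp by simp
  ultimately show ?thesis unfolding e1 e2 by (intro divide_strict_right_mono)
qed

lemma main:
  assumes E: "Psi \<in> E_set F M N" and N2: "N \<ge> 2" and MN: "M \<ge> N"
  defines "a \<equiv> real N / real M"
  defines "t0 \<equiv> (real N - real N ^ 2 / real M) / (real M * (real M - 1))"
  shows "NE 2 Psi \<le> real (card (Pr M)) * Hf a t0"
    and "NE 2 Psi = real (card (Pr M)) * Hf a t0 \<longleftrightarrow> equiangular Psi \<and> parseval Psi"
proof -
  have P: "Psi \<in> carrier_mat N M" and nrm: "\<And>j. j < M \<Longrightarrow> col_norm Psi j = sqrt a"
    using E unfolding E_set_def frames_in_def a_def by auto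
  have M2: "M \<ge> 2" using N2 MN by simp
  have Mp: "real M > 0" using M2 by simp
  have ap: "a > 0" unfolding a_def using N2 M2 by simp
  have nsq: "(col_norm Psi j)\<^sup>2 = a" if "j < M" for j using nrm[OF that] ap by simp
  have tr: "(\<Sum>i<M. (col_norm Psi i)\<^sup>2) = real N"
  proof -
    have "(\<Sum>i<M. (col_norm Psi i)\<^sup>2) = (\<Sum>i<M. a)" by (rule sum.cong) (simp_all add: nsq)
    then show ?thesis using Mp unfolding a_def by simp
  qed
  define T where "T p = (cmod (col_inner Psi (fst p) (snd p)))\<^sup>2" for p
  define PP where "PP = real (card (Pr M))"
  have PP2: "2 * PP = real M * (real M - 1)" unfolding PP_def by (rule card_Pr)
  have "real M * (real M - 1) > 0" using M2 by simp
  then have PPp: "PP > 0" using PP2 by linarith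
  have cdiag: "cmod (col_inner Psi i i) = a" if "i < M" for i
    unfolding col_inner_diag nsq[OF that] using ap by simp
  have FPd: "FPot Psi = real M * a^2 + 2 * (\<Sum>p\<in>Pr M. T p)"
  proof -
    have "FPot Psi = (\<Sum>i<M. \<Sum>j<M. (cmod (col_inner Psi i j))\<^sup>2)" unfolding FPot_def using P by simp
    also have "\<dots> = (\<Sum>i<M. (cmod (col_inner Psi i i))\<^sup>2) + 2 * (\<Sum>p\<in>Pr M. T p)"
      unfolding T_def by (rule decomp) (metis col_inner_swap complex_mod_cnj)
    also have "(\<Sum>i<M. (cmod (col_inner Psi i i))\<^sup>2) = real M * a^2" using cdiag by simp
    finally show ?thesis .
  qed
  have Pt0: "PP * t0 = (real N - real N ^ 2 / real M) / 2"
  proof -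
    have nz: "real M * (real M - 1) \<noteq> 0" using M2 by simp
    have "PP * t0 = (2*PP) * t0 / 2" by simp
    also have "\<dots> = (real M * (real M - 1)) * t0 / 2" unfolding PP2 ..
    also have "\<dots> = (real N - real N ^ 2 / real M) / 2" unfolding t0_def using nz by simp
    finally show ?thesis .
  qed
  have Ma2: "real M * a^2 = real N ^ 2 / real M" unfolding a_def using Mp by (simp add: field_simps power2_eq_square)
  have ST: "(\<Sum>p\<in>Pr M. T p) - PP * t0 = (FPot Psi - real N) / 2"
  proof -
    have "PP * t0 = real N / 2 - (real N ^ 2 / real M) / 2" using Pt0 by (simp add: diff_divide_distrib)
    moreover have "(FPot Psi - real N) / 2 = FPot Psi / 2 - real N / 2" by (simp add: diff_divide_distrib)
    moreover have "\<And>F Ma S Pt X n :: real. F = Ma + 2*S \<Longrightarrow> Pt = n/2 - X/2 \<Longrightarrow> Ma = X \<Longrightarrow> (F - n)/2 = F/2 - n/2 \<Longrightarrow> S - Pt = (F - n)/2"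
      by linarith
    ultimately show ?thesis using FPd Ma2 by blast
  qed
  have ca: "cmod (col_inner Psi (fst p) (snd p)) \<le> a" if "p \<in> Pr M" for p
  proof -
    have "fst p < M" "snd p < M" using that by (auto simp: Pr_def)
    then show ?thesis using col_CS[of Psi "fst p" "snd p"] nrm ap by simp
  qed
  have Ta: "T p \<le> a^2" if "p \<in> Pr M" for p
  proof -
    note ca[OF that]
    then show ?thesis unfolding T_def by (simp add: power_mono)
  qed
  have t0a: "t0 < a^2" unfolding t0_def a_def using t0_lt[of "real N" "real M"] N2 MN by simp
  have NEH: "NE 2 Psi = (\<Sum>p\<in>Pr M. Hf a (T p))"
    unfolding NE2_pairs[OF P]
  proof (rule sum.cong[OF refl])
    fix p assume p: "p \<in> Pr M"
    then have ij: "fst p < snd p" "snd p < M" by (auto simp: Pr_def)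
    have "nuclear_norm (col_submat Psi {fst p, snd p}) =
       sqrt (a + cmod (col_inner Psi (fst p) (snd p))) + sqrt (a - cmod (col_inner Psi (fst p) (snd p)))"
      using nn_pair[OF P ij nsq nsq] ij by simp
    also have "\<dots> = Hf a (T p)" unfolding T_def using ca[OF p] by (intro Hf_pair) auto
    finally show "nuclear_norm (col_submat Psi {fst p, snd p}) = Hf a (T p)" .
  qed
  have SB: "PP * t0 \<le> (\<Sum>p\<in>Pr M. T p)" using ST parseval_FP(1)[OF P tr] by simp
  have SB': "real (card (Pr M)) * t0 \<le> (\<Sum>p\<in>Pr M. T p)" using SB unfolding PP_def .
  note sb = sum_bound[OF Pr_finite ap t0a Ta SB']
  show "NE 2 Psi \<le> real (card (Pr M)) * Hf a t0" using sb(1) NEH by simp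
  have dc: "dim_col Psi = M" using P by simp
  have Tsym: "(cmod (col_inner Psi i j))\<^sup>2 = T (min i j, max i j)" for i j
  proof (cases "i \<le> j")
    case True then show ?thesis unfolding T_def by (simp add: min_def max_def)
  next
    case False
    then have mm: "min i j = j" "max i j = i" by auto
    show ?thesis unfolding T_def mm fst_conv snd_conv col_inner_swap[of Psi i j] complex_mod_cnj ..
  qed
  have mmP: "(min i j, max i j) \<in> Pr M" if "i < M" "j < M" "i \<noteq> j" for i j
    using that by (auto simp: Pr_def min_def max_def)
  show "NE 2 Psi = real (card (Pr M)) * Hf a t0 \<longleftrightarrow> equiangular Psi \<and> parseval Psi"
  proof
    assume eq: "NE 2 Psi = real (card (Pr M)) * Hf a t0"
    have allT: "\<forall>p\<in>Pr M. T p = t0" using sb(2) eq NEH by simp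
    then have "(\<Sum>p\<in>Pr M. T p) = PP * t0" unfolding PP_def by simp
    then have "FPot Psi = real N" using ST by simp
    then have par: "parseval Psi" using parseval_FP(2)[OF P tr] by simp
    have "cmod (col_inner Psi i j) = sqrt t0" if "i < M" "j < M" "i \<noteq> j" for i j
    proof -
      have "(cmod (col_inner Psi i j))\<^sup>2 = t0" using Tsym allT mmP[OF that] by simp
      then show ?thesis by (metis norm_ge_zero real_sqrt_unique)
    qed
    note cs = this
    have "equiangular Psi" unfolding equiangular_def dc
    proof (intro conjI allI impI)
      fix i j assume "i < M" "j < M"
      then show "col_norm Psi i = col_norm Psi j" using nrm by simp
    next
      fix i j k l assume "i < M" "j < M" "k < M" "l < M" "i \<noteq> j" "k \<noteq> l"
      then show "cmod (col_inner Psi i j) = cmod (col_inner Psi k l)" using cs[of i j] cs[of k l] by simp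
    qed
    then show "equiangular Psi \<and> parseval Psi" using par by simp
  next
    assume ep: "equiangular Psi \<and> parseval Psi"
    then have "FPot Psi = real N" using parseval_FP(2)[OF P tr] by simp
    then have S1: "(\<Sum>p\<in>Pr M. T p) = PP * t0" using ST by simp
    have M01: "0 < M" "1 < M" using M2 by auto
    have EQ: "\<forall>i<M. \<forall>j<M. \<forall>k<M. \<forall>l<M. i \<noteq> j \<longrightarrow> k \<noteq> l \<longrightarrow> cmod (col_inner Psi i j) = cmod (col_inner Psi k l)"
      using ep unfolding equiangular_def dc by (elim conjE)
    have TT: "T p = T (0,1)" if "p \<in> Pr M" for p
    proof -
      have "fst p < M" "snd p < M" "fst p \<noteq> snd p" using that by (auto simp: Pr_def)
      then have "cmod (col_inner Psi (fst p) (snd p)) = cmod (col_inner Psi 0 1)"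
        using EQ M01 by (meson zero_neq_one)
      then show ?thesis unfolding T_def by simp
    qed
    then have "(\<Sum>p\<in>Pr M. T p) = PP * T (0,1)" unfolding PP_def by simp
    then have "T (0,1) = t0" using S1 PPp by simp
    then have "\<forall>p\<in>Pr M. T p = t0" using TT by simp
    then show "NE 2 Psi = real (card (Pr M)) * Hf a t0" unfolding NEH by simp
  qed
qed

lemma trace_cn: assumes P: "Psi \<in> carrier_mat N M"
  shows "(\<Sum>r<N. Re ((Psi * mat_adjoint Psi) $$ (r,r))) = (\<Sum>i<M. (col_norm Psi i)\<^sup>2)"
proof -
  let ?S = "Psi * mat_adjoint Psi"
  have Srr: "Re (?S $$ (r,r)) = (\<Sum>i<M. (cmod (Psi $$ (r,i)))\<^sup>2)" if "r < N" for r
  proof -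
    have "?S $$ (r,r) = (\<Sum>i<M. Psi $$ (r,i) * cnj (Psi $$ (r,i)))"
      using mult_index[OF P adj_carrier[OF P]] adj_index[OF P] that by simp
    also have "\<dots> = complex_of_real (\<Sum>i<M. (cmod (Psi $$ (r,i)))\<^sup>2)"
      unfolding of_real_sum by (intro sum.cong refl) (metis complex_norm_square)
    finally show ?thesis by simp
  qed
  have "(\<Sum>r<N. Re (?S $$ (r,r))) = (\<Sum>r<N. \<Sum>i<M. (cmod (Psi $$ (r,i)))\<^sup>2)"
    using Srr by simp
  also have "\<dots> = (\<Sum>i<M. \<Sum>r<N. (cmod (Psi $$ (r,i)))\<^sup>2)" by (rule sum.swap)
  also have "\<dots> = (\<Sum>i<M. (col_norm Psi i)\<^sup>2)" unfolding col_norm_sq using P by simp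
  finally show ?thesis .
qed

lemma etf_props:
  assumes F: "Psi \<in> frames_in F M N" and eq: "equiangular Psi" and par: "parseval Psi" and N2: "N \<ge> 2"
  shows "Psi \<in> E_set F M N" and "M \<ge> N"
proof -
  have P: "Psi \<in> carrier_mat N M" using F unfolding frames_in_def by simp
  have dc: "dim_col Psi = M" using P by simp
  have S1: "Psi * mat_adjoint Psi = 1\<^sub>m N" using par P unfolding parseval_def by simp
  have tr: "(\<Sum>i<M. (col_norm Psi i)\<^sup>2) = real N"
    using trace_cn[OF P] unfolding S1 by simp
  have M0: "M > 0"
  proof (rule ccontr)
    assume "\<not> M > 0" then have "M = 0" by simp
    then show False using tr N2 by simp
  qed
  define c where "c = col_norm Psi 0"
  have ceq: "col_norm Psi i = c" if "i < M" for i
    using eq M0 that unfolding equiangular_def dc c_def by blast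
  have "(\<Sum>i<M. (col_norm Psi i)\<^sup>2) = real M * c^2" using ceq by simp
  then have c2: "c^2 = real N / real M" using tr M0 by (simp add: field_simps)
  have c0: "c \<ge> 0" unfolding c_def col_norm_def by (simp add: sum_nonneg)
  have csq: "c = sqrt (real N / real M)" using c2 c0 by (metis real_sqrt_unique)
  show "Psi \<in> E_set F M N" unfolding E_set_def using F ceq csq by simp
  have FPN: "FPot Psi = real N" using parseval_FP(2)[OF P tr] par by simp
  define T where "T p = (cmod (col_inner Psi (fst p) (snd p)))\<^sup>2" for p
  have "FPot Psi = (\<Sum>i<M. \<Sum>j<M. (cmod (col_inner Psi i j))\<^sup>2)" unfolding FPot_def dc ..
  also have "\<dots> = (\<Sum>i<M. (cmod (col_inner Psi i i))\<^sup>2) + 2 * (\<Sum>p\<in>Pr M. T p)"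
    unfolding T_def by (rule decomp) (metis col_inner_swap complex_mod_cnj)
  also have "(\<Sum>i<M. (cmod (col_inner Psi i i))\<^sup>2) = real M * (c^2)^2"
  proof -
    have "cmod (col_inner Psi i i) = c^2" if "i < M" for i
      unfolding col_inner_diag ceq[OF that] by (simp add: norm_power)
    then show ?thesis by simp
  qed
  finally have "real N = real M * (real N / real M)^2 + 2 * (\<Sum>p\<in>Pr M. T p)" using FPN c2 by simp
  moreover have "(\<Sum>p\<in>Pr M. T p) \<ge> 0" unfolding T_def by (simp add: sum_nonneg)
  ultimately have "real M * (real N / real M)^2 \<le> real N" by linarith
  then have "real N * real N \<le> real N * real M" using M0 by (simp add: field_simps power2_eq_square)
  then have "real N \<le> real M" using N2 by simp
  then show "M \<ge> N" by simp
qed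

theorem proposition20:
  fixes F :: "complex set" and M N :: nat and Phi :: "complex mat"
  assumes "F = \<real> \<or> F = UNIV"
    and "N \<ge> 2"
    and "\<exists>Psi \<in> frames_in F M N. equiangular Psi \<and> parseval Psi"
    and "Phi \<in> E_set F M N"
  shows "(\<forall>Psi \<in> E_set F M N. NE 2 Psi \<le> NE 2 Phi) \<longleftrightarrow> equiangular Phi \<and> parseval Phi"
proof -
  obtain Psi0 where P0: "Psi0 \<in> frames_in F M N" "equiangular Psi0" "parseval Psi0" using assms(3) by blast
  have E0: "Psi0 \<in> E_set F M N" and MN: "M \<ge> N" using etf_props[OF P0 assms(2)] by auto
  define V where "V = real (card (Pr M)) * Hf (real N / real M) ((real N - real N ^ 2 / real M) / (real M * (real M - 1)))"
  note m0 = main[OF E0 assms(2) MN, folded V_def]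
  note m = main[OF assms(4) assms(2) MN, folded V_def]
  have V0: "NE 2 Psi0 = V" using m0(2) P0 by simp
  show ?thesis
  proof
    assume "\<forall>Psi \<in> E_set F M N. NE 2 Psi \<le> NE 2 Phi"
    then have "V \<le> NE 2 Phi" using E0 V0 by auto
    then have "NE 2 Phi = V" using m(1) by simp
    then show "equiangular Phi \<and> parseval Phi" using m(2) by simp
  next
    assume "equiangular Phi \<and> parseval Phi"
    then have "NE 2 Phi = V" using m(2) by simp
    then show "\<forall>Psi \<in> E_set F M N. NE 2 Psi \<le> NE 2 Phi"
      using main(1)[OF _ assms(2) MN, folded V_def] by auto
  qed
qed


end
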